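(* Let $\mathbf{\Sigma}$ be a cluster pattern of rank $n$ with free coefficients at $t_0\in\mathbb{T}_n$, and let $\mathbf{\Sigma}'$ be a cluster pattern of rank $n$ with coefficients in any semifield $\mathbb{P}$ having the same $B$-pattern as $\mathbf{\Sigma}$. Then for any $t,t'\in\mathbb{T}_n$ and any permutation $\sigma\in S_n$: if $\Sigma_t=\sigma\Sigma_{t'}$, then $\Sigma'_t=\sigma\Sigma'_{t'}$.
   Context: A semifield is a multiplicative abelian group $\mathbb{P}$ with a commutative, associative addition $\oplus$ satisfying $(a\oplus b)c=ac\oplus bc$; $\mathbb{Q}\mathbb{P}$ is the fraction field of the group ring $\mathbb{Z}\mathbb{P}$. The universal semifield $\mathbb{Q}_{\mathrm{sf}}(\mathbf{y})$ ($\mathbf{y}=(y_1,\dots,y_n)$ formal variables) consists of rational functions in $\mathbf{y}$ expressible as ratios of nonzero polynomials with nonnegative integer coefficients. A seed with coefficients in $\mathbb{P}$ is $(\mathbf{x},\mathbf{y},B)$ with $\mathbf{x}$ a generating transcendence basis of an ambient field $\mathcal{F}\cong\mathbb{Q}\mathbb{P}(u_1,\dots,u_n)$ over $\mathbb{Q}\mathbb{P}$, $\mathbf{y}\in\mathbb{P}^n$, $B$ an $n\times n$ skew-symmetrizable integer matrix. With $[a]_+=\max(a,0)$ and $\hat y_i=y_i\prod_jx_j^{b_{ji}}$, the mutation $\mu_k$ is: $x'_k=x_k^{-1}\big(\prod_{j}x_j^{[-b_{jk}]_+}\big)\frac{1+\hat y_k}{1\oplus y_k}$, $x'_i=x_i$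 ($i\ne k$); $y'_k=y_k^{-1}$, $y'_i=y_iy_k^{[b_{ki}]_+}(1\oplus y_k)^{-b_{ki}}$ ($i\neq k$); $b'_{ij}=-b_{ij}$ if $i=k$ or $j=k$, and $b'_{ij}=b_{ij}+b_{ik}[b_{kj}]_++[-b_{ik}]_+b_{kj}$ otherwise. $\mathbb{T}_n$ is the $n$-regular tree with edges labeled $1,\dots,n$, distinct at each vertex. A cluster pattern is $\{\Sigma_t=(\mathbf{x}_t,\mathbf{y}_t,B_t)\}_{t\in\mathbb{T}_n}$ with $\Sigma_{t'}=\mu_k(\Sigma_t)$ whenever $t,t'$ are joined by an edge labeled $k$; its $B$-pattern is $\{B_t\}$. It has free coefficients at $t_0$ if its coefficient semifield is $\mathbb{Q}_{\mathrm{sf}}(\mathbf{y})$ and $\mathbf{y}_{t_0}=\mathbf{y}$. For $\sigma\in S_n$, $\sigma(\mathbf{x},\mathbf{y},B)=(\mathbf{x}',\mathbf{y}',B')$ with $x'_i=x_{\sigma^{-1}(i)}$, $y'_i=y_{\sigma^{-1}(i)}$, $b'_{ij}=b_{\sigma^{-1}(i)\sigma^{-1}(j)}$. *)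

theory Defs
  imports Complex_Main "HOL-Combinatorics.Permutations"
begin

record 'a semifield =
  sf_carrier :: "'a set"
  sf_mult :: "'a \<Rightarrow> 'a \<Rightarrow> 'a"
  sf_one :: 'a
  sf_inv :: "'a \<Rightarrow> 'a"
  sf_add :: "'a \<Rightarrow> 'a \<Rightarrow> 'a"

definition is_semifield :: "('a, 'b) semifield_scheme \<Rightarrow> bool" where
  "is_semifield P \<longleftrightarrow>
     sf_one P \<in> sf_carrier P \<and>
     (\<forall>a\<in>sf_carrier P. \<forall>b\<in>sf_carrier P.
        sf_mult P a b \<in> sf_carrier P \<and> sf_add P a b \<in> sf_carrier P) \<and>
     (\<forall>a\<in>sf_carrier P. sf_inv P a \<in> sf_carrier P) \<and>
     (\<forall>a\<in>sf_carrier P. \<forall>b\<in>sf_carrier P. \<forall>c\<in>sf_carrier P.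
        sf_mult P (sf_mult P a b) c = sf_mult P a (sf_mult P b c) \<and>
        sf_add P (sf_add P a b) c = sf_add P a (sf_add P b c) \<and>
        sf_mult P (sf_add P a b) c = sf_add P (sf_mult P a c) (sf_mult P b c)) \<and>
     (\<forall>a\<in>sf_carrier P. \<forall>b\<in>sf_carrier P.
        sf_mult P a b = sf_mult P b a \<and> sf_add P a b = sf_add P b a) \<and>
     (\<forall>a\<in>sf_carrier P. sf_mult P (sf_one P) a = a \<and> sf_mult P (sf_inv P a) a = sf_one P)"

fun sf_npow :: "('a, 'b) semifield_scheme \<Rightarrow> 'a \<Rightarrow> nat \<Rightarrow> 'a" where
  "sf_npow P a 0 = sf_one P"
| "sf_npow P a (Suc m) = sf_mult P a (sf_npow P a m)"

definition sf_ipow :: "('a, 'b) semifield_scheme \<Rightarrow> 'a \<Rightarrow> int \<Rightarrow> 'a" where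
  "sf_ipow P a k = (if 0 \<le> k then sf_npow P a (nat k) else sf_inv P (sf_npow P a (nat (- k))))"

definition pos :: "int \<Rightarrow> int" where
  "pos a = max a 0"

definition monomials :: "nat \<Rightarrow> (nat \<Rightarrow> nat) set" where
  "monomials n = {m. \<forall>i\<ge>n. m i = 0}"

definition fin_poly :: "nat \<Rightarrow> ((nat \<Rightarrow> nat) \<Rightarrow> 'a::zero) \<Rightarrow> bool" where
  "fin_poly n c \<longleftrightarrow> finite {m. c m \<noteq> 0} \<and> {m. c m \<noteq> 0} \<subseteq> monomials n"

definition poly_eval :: "nat \<Rightarrow> ((nat \<Rightarrow> nat) \<Rightarrow> 'f::comm_ring_1) \<Rightarrow> (nat \<Rightarrow> 'f) \<Rightarrow> 'f" where
  "poly_eval n c x = (\<Sum>m\<in>{m. c m \<noteq> 0}. c m * (\<Prod>i<n. x i ^ m i))"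

text \<open>Image of the group ring ZP in a field F under the extension of a map iota : P -> F.\<close>
definition group_ring_image :: "'p set \<Rightarrow> ('p \<Rightarrow> 'f::field) \<Rightarrow> 'f set" where
  "group_ring_image C \<iota> =
     {\<Sum>s\<in>S. of_int (c s) * \<iota> s | S c. finite S \<and> S \<subseteq> C}"

text \<open>Image of QP = Frac(ZP).\<close>
definition frac_group_ring :: "'p set \<Rightarrow> ('p \<Rightarrow> 'f::field) \<Rightarrow> 'f set" where
  "frac_group_ring C \<iota> =
     {a / b | a b. a \<in> group_ring_image C \<iota> \<and> b \<in> group_ring_image C \<iota> \<and> b \<noteq> 0}"

text \<open>iota is a multiplicative homomorphism whose Z-linear extension ZP -> F is injective,
  i.e. it realises QP as a subfield of the ambient field F.\<close>
definition coeff_embedding :: "('p, 'b) semifield_scheme \<Rightarrow> ('p \<Rightarrow> 'f::field) \<Rightarrow> bool" where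
  "coeff_embedding P \<iota> \<longleftrightarrow>
     (\<forall>a\<in>sf_carrier P. \<forall>b\<in>sf_carrier P. \<iota> (sf_mult P a b) = \<iota> a * \<iota> b) \<and>
     \<iota> (sf_one P) = 1 \<and>
     (\<forall>S c. finite S \<longrightarrow> S \<subseteq> sf_carrier P \<longrightarrow>
        (\<Sum>s\<in>S. of_int (c s) * \<iota> s) = (0::'f) \<longrightarrow> (\<forall>s\<in>S. c s = (0::int)))"

text \<open>x_0..x_{n-1} is a generating transcendence basis of the field F (= UNIV) over the subfield K.\<close>
definition gen_trans_basis :: "nat \<Rightarrow> 'f set \<Rightarrow> (nat \<Rightarrow> 'f::field) \<Rightarrow> bool" where
  "gen_trans_basis n K x \<longleftrightarrow>
     (\<forall>c. fin_poly n c \<longrightarrow> (\<forall>m. c m \<in> K) \<longrightarrow> poly_eval n c x = 0 \<longrightarrow> (\<forall>m. c m = 0)) \<and>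
     (\<forall>z. \<exists>p q. fin_poly n p \<and> fin_poly n q \<and> (\<forall>m. p m \<in> K \<and> q m \<in> K) \<and>
          poly_eval n q x \<noteq> 0 \<and> z = poly_eval n p x / poly_eval n q x)"

definition skew_symmetrizable :: "nat \<Rightarrow> (nat \<Rightarrow> nat \<Rightarrow> int) \<Rightarrow> bool" where
  "skew_symmetrizable n B \<longleftrightarrow>
     (\<exists>d::nat \<Rightarrow> int. (\<forall>i<n. d i > 0) \<and> (\<forall>i<n. \<forall>j<n. d i * B i j = - (d j * B j i)))"

definition is_seed :: "('p, 'b) semifield_scheme \<Rightarrow> ('p \<Rightarrow> 'f::field) \<Rightarrow> nat \<Rightarrow>
    (nat \<Rightarrow> 'f) \<Rightarrow> (nat \<Rightarrow> 'p) \<Rightarrow> (nat \<Rightarrow> nat \<Rightarrow> int) \<Rightarrow> bool" where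
  "is_seed P \<iota> n x y B \<longleftrightarrow>
     gen_trans_basis n (frac_group_ring (sf_carrier P) \<iota>) x \<and>
     (\<forall>i<n. y i \<in> sf_carrier P) \<and> skew_symmetrizable n B"

definition mut_x :: "('p, 'b) semifield_scheme \<Rightarrow> ('p \<Rightarrow> 'f::field) \<Rightarrow> nat \<Rightarrow> nat \<Rightarrow>
    (nat \<Rightarrow> 'f) \<Rightarrow> (nat \<Rightarrow> 'p) \<Rightarrow> (nat \<Rightarrow> nat \<Rightarrow> int) \<Rightarrow> nat \<Rightarrow> 'f" where
  "mut_x P \<iota> n k x y B i =
     (if i = k then
        inverse (x k) * (\<Prod>j<n. x j powi pos (- B j k)) *
        (1 + \<iota> (y k) * (\<Prod>j<n. x j powi B j k)) / \<iota> (sf_add P (sf_one P) (y k))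
      else x i)"

definition mut_y :: "('p, 'b) semifield_scheme \<Rightarrow> nat \<Rightarrow>
    (nat \<Rightarrow> 'p) \<Rightarrow> (nat \<Rightarrow> nat \<Rightarrow> int) \<Rightarrow> nat \<Rightarrow> 'p" where
  "mut_y P k y B i =
     (if i = k then sf_inv P (y k)
      else sf_mult P (sf_mult P (y i) (sf_ipow P (y k) (pos (B k i))))
                     (sf_ipow P (sf_add P (sf_one P) (y k)) (- B k i)))"

definition mut_B :: "nat \<Rightarrow> (nat \<Rightarrow> nat \<Rightarrow> int) \<Rightarrow> nat \<Rightarrow> nat \<Rightarrow> int" where
  "mut_B k B i j =
     (if i = k \<or> j = k then - B i j
      else B i j + B i k * pos (B k j) + pos (- B i k) * B k j)"

text \<open>Vertices: reduced words over labels 0..n-1 (no two consecutive letters equal);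
  edges: w -- w@[k], labelled k.\<close>
definition tree_vertex :: "nat \<Rightarrow> nat list \<Rightarrow> bool" where
  "tree_vertex n w \<longleftrightarrow> set w \<subseteq> {..<n} \<and> (\<forall>i. Suc i < length w \<longrightarrow> w ! i \<noteq> w ! Suc i)"

definition tree_edge :: "nat \<Rightarrow> nat list \<Rightarrow> nat list \<Rightarrow> nat \<Rightarrow> bool" where
  "tree_edge n t t' k \<longleftrightarrow>
     tree_vertex n t \<and> tree_vertex n t' \<and> k < n \<and> (t' = t @ [k] \<or> t = t' @ [k])"

definition cluster_pattern :: "('p, 'b) semifield_scheme \<Rightarrow> ('p \<Rightarrow> 'f::field) \<Rightarrow> nat \<Rightarrow>
    (nat list \<Rightarrow> nat \<Rightarrow> 'f) \<Rightarrow> (nat list \<Rightarrow> nat \<Rightarrow> 'p) \<Rightarrow> (nat list \<Rightarrow> nat \<Rightarrow> nat \<Rightarrow> int) \<Rightarrow> bool" where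
  "cluster_pattern P \<iota> n X Y B \<longleftrightarrow>
     is_semifield P \<and> coeff_embedding P \<iota> \<and>
     (\<forall>t. tree_vertex n t \<longrightarrow> is_seed P \<iota> n (X t) (Y t) (B t)) \<and>
     (\<forall>t t' k. tree_edge n t t' k \<longrightarrow>
        (\<forall>i<n. X t' i = mut_x P \<iota> n k (X t) (Y t) (B t) i \<and>
               Y t' i = mut_y P k (Y t) (B t) i \<and>
               (\<forall>j<n. B t' i j = mut_B k (B t) i j)))"

text \<open>y_0..y_{n-1} in a field K of characteristic 0 realise K as the rational function field Q(y).\<close>
definition rational_function_field :: "nat \<Rightarrow> (nat \<Rightarrow> 'k::field_char_0) \<Rightarrow> bool" where
  "rational_function_field n y \<longleftrightarrow>
     (\<forall>c::(nat \<Rightarrow> nat) \<Rightarrow> rat. fin_poly n c \<longrightarrow>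
        poly_eval n (\<lambda>m. of_rat (c m)) y = 0 \<longrightarrow> (\<forall>m. c m = 0)) \<and>
     (\<forall>z. \<exists>p q :: (nat \<Rightarrow> nat) \<Rightarrow> rat. fin_poly n p \<and> fin_poly n q \<and>
        poly_eval n (\<lambda>m. of_rat (q m)) y \<noteq> 0 \<and>
        z = poly_eval n (\<lambda>m. of_rat (p m)) y / poly_eval n (\<lambda>m. of_rat (q m)) y)"

definition nn_poly :: "nat \<Rightarrow> ((nat \<Rightarrow> nat) \<Rightarrow> 'k::field_char_0) \<Rightarrow> bool" where
  "nn_poly n c \<longleftrightarrow> fin_poly n c \<and> (\<exists>m. c m \<noteq> 0) \<and> (\<forall>m. \<exists>a::nat. c m = of_nat a)"

definition univ_sf_carrier :: "nat \<Rightarrow> (nat \<Rightarrow> 'k::field_char_0) \<Rightarrow> 'k set" where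
  "univ_sf_carrier n y = {poly_eval n p y / poly_eval n q y | p q. nn_poly n p \<and> nn_poly n q}"

definition univ_semifield :: "nat \<Rightarrow> (nat \<Rightarrow> 'k::field_char_0) \<Rightarrow> 'k semifield" where
  "univ_semifield n y =
     \<lparr>sf_carrier = univ_sf_carrier n y, sf_mult = (*), sf_one = 1,
      sf_inv = inverse, sf_add = (+)\<rparr>"

text \<open>(x,y,B) = sigma (x2,y2,B2)\<close>
definition seed_eq_perm :: "nat \<Rightarrow> (nat \<Rightarrow> nat) \<Rightarrow>
    (nat \<Rightarrow> 'f) \<Rightarrow> (nat \<Rightarrow> 'p) \<Rightarrow> (nat \<Rightarrow> nat \<Rightarrow> int) \<Rightarrow>
    (nat \<Rightarrow> 'f) \<Rightarrow> (nat \<Rightarrow> 'p) \<Rightarrow> (nat \<Rightarrow> nat \<Rightarrow> int) \<Rightarrow> bool" where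
  "seed_eq_perm n \<sigma> x y B x2 y2 B2 \<longleftrightarrow>
     (\<forall>i<n. x i = x2 (inv \<sigma> i) \<and> y i = y2 (inv \<sigma> i) \<and>
            (\<forall>j<n. B i j = B2 (inv \<sigma> i) (inv \<sigma> j)))"

end

theory Submission
  imports Defs "HOL-Library.Multiset"
begin


locale sfld =
  fixes P :: "('q, 'b) semifield_scheme"
  assumes sf: "is_semifield P"
begin

abbreviation "C \<equiv> sf_carrier P"
abbreviation "mul \<equiv> sf_mult P"
abbreviation "add \<equiv> sf_add P"
abbreviation "one \<equiv> sf_one P"
abbreviation "inv' \<equiv> sf_inv P"

lemma ax: "one \<in> C" "\<And>a b. a \<in> C \<Longrightarrow> b \<in> C \<Longrightarrow> mul a b \<in> C"
  "\<And>a b. a \<in> C \<Longrightarrow> b \<in> C \<Longrightarrow> add a b \<in> C" "\<And>a. a \<in> C \<Longrightarrow> inv' a \<in> C"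
  "\<And>a b c. a \<in> C \<Longrightarrow> b \<in> C \<Longrightarrow> c \<in> C \<Longrightarrow> mul (mul a b) c = mul a (mul b c)"
  "\<And>a b c. a \<in> C \<Longrightarrow> b \<in> C \<Longrightarrow> c \<in> C \<Longrightarrow> add (add a b) c = add a (add b c)"
  "\<And>a b c. a \<in> C \<Longrightarrow> b \<in> C \<Longrightarrow> c \<in> C \<Longrightarrow> mul (add a b) c = add (mul a c) (mul b c)"
  "\<And>a b. a \<in> C \<Longrightarrow> b \<in> C \<Longrightarrow> mul a b = mul b a"
  "\<And>a b. a \<in> C \<Longrightarrow> b \<in> C \<Longrightarrow> add a b = add b a"
  "\<And>a. a \<in> C \<Longrightarrow> mul one a = a" "\<And>a. a \<in> C \<Longrightarrow> mul (inv' a) a = one"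
  using sf unfolding is_semifield_def by blast+
lemma one_in[simp]: "one \<in> C" by (rule ax)
lemma mul_in[simp]: "a \<in> C \<Longrightarrow> b \<in> C \<Longrightarrow> mul a b \<in> C" by (rule ax)
lemma add_in[simp]: "a \<in> C \<Longrightarrow> b \<in> C \<Longrightarrow> add a b \<in> C" by (rule ax)
lemma inv_in[simp]: "a \<in> C \<Longrightarrow> inv' a \<in> C" by (rule ax)
lemma mul_assoc: "a \<in> C \<Longrightarrow> b \<in> C \<Longrightarrow> c \<in> C \<Longrightarrow> mul (mul a b) c = mul a (mul b c)" by (rule ax)
lemma add_assoc: "a \<in> C \<Longrightarrow> b \<in> C \<Longrightarrow> c \<in> C \<Longrightarrow> add (add a b) c = add a (add b c)" by (rule ax)
lemma distr: "a \<in> C \<Longrightarrow> b \<in> C \<Longrightarrow> c \<in> C \<Longrightarrow> mul (add a b) c = add (mul a c) (mul b c)" by (rule ax)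
lemma mul_comm: "a \<in> C \<Longrightarrow> b \<in> C \<Longrightarrow> mul a b = mul b a" by (rule ax)
lemma add_comm: "a \<in> C \<Longrightarrow> b \<in> C \<Longrightarrow> add a b = add b a" by (rule ax)
lemma one_left[simp]: "a \<in> C \<Longrightarrow> mul one a = a" by (rule ax)
lemma inv_left[simp]: "a \<in> C \<Longrightarrow> mul (inv' a) a = one" by (rule ax)
lemma one_right[simp]: "a \<in> C \<Longrightarrow> mul a one = a"
  using mul_comm one_left one_in by metis
lemma inv_right[simp]: "a \<in> C \<Longrightarrow> mul a (inv' a) = one"
  using mul_comm inv_left inv_in by metis
lemma distl: "a \<in> C \<Longrightarrow> b \<in> C \<Longrightarrow> c \<in> C \<Longrightarrow> mul c (add a b) = add (mul c a) (mul c b)"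
  using distr mul_comm by (metis add_in)
lemma mul_lcomm: "a \<in> C \<Longrightarrow> b \<in> C \<Longrightarrow> c \<in> C \<Longrightarrow> mul a (mul b c) = mul b (mul a c)"
  by (metis mul_assoc mul_comm)
lemma cancel: "a \<in> C \<Longrightarrow> b \<in> C \<Longrightarrow> c \<in> C \<Longrightarrow> mul c a = mul c b \<Longrightarrow> a = b"
  by (metis inv_in mul_assoc inv_left one_left)
lemma inv_mul: "a \<in> C \<Longrightarrow> b \<in> C \<Longrightarrow> inv' (mul a b) = mul (inv' a) (inv' b)"
proof -
  assume a: "a \<in> C" and b: "b \<in> C"
  have "mul (mul a b) (mul (inv' a) (inv' b)) = mul a (mul b (mul (inv' a) (inv' b)))"
    using a b by (simp add: mul_assoc)
  also have "\<dots> = mul a (mul (inv' a) (mul b (inv' b)))"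
    using a b mul_lcomm[of b "inv' a" "inv' b"] by simp
  also have "\<dots> = one" using a b by simp
  finally have e: "mul (mul a b) (mul (inv' a) (inv' b)) = one" .
  have q: "mul (mul a b) (inv' (mul a b)) = mul (mul a b) (mul (inv' a) (inv' b))"
    using a b e by simp
  show ?thesis by (rule cancel[of _ _ "mul a b"]) (use a b q in auto)
qed
lemma inv_inv: "a \<in> C \<Longrightarrow> inv' (inv' a) = a"
  by (rule cancel[of _ _ "inv' a"]) auto
lemma inv_one[simp]: "inv' one = one"
  by (rule cancel[of _ _ one]) auto
lemma frac_eq: "a \<in> C \<Longrightarrow> b \<in> C \<Longrightarrow> c \<in> C \<Longrightarrow> d \<in> C \<Longrightarrow> mul a d = mul c b \<Longrightarrow>
   mul a (inv' b) = mul c (inv' d)"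
proof -
  assume h: "a \<in> C" "b \<in> C" "c \<in> C" "d \<in> C" and e: "mul a d = mul c b"
  have "mul a (inv' b) = mul a (mul (inv' b) (mul d (inv' d)))" using h by simp
  also have "\<dots> = mul a (mul d (mul (inv' b) (inv' d)))"
    using h mul_lcomm[of d "inv' b" "inv' d"] by simp
  also have "\<dots> = mul (mul a d) (mul (inv' b) (inv' d))" using h by (simp add: mul_assoc)
  also have "\<dots> = mul (mul c b) (mul (inv' b) (inv' d))" using e by simp
  also have "\<dots> = mul c (mul b (mul (inv' b) (inv' d)))" using h by (simp add: mul_assoc)
  also have "\<dots> = mul c (inv' d)" using h by (simp flip: mul_assoc)
  finally show ?thesis .
qed

lemma npow_in[simp]: "a \<in> C \<Longrightarrow> sf_npow P a m \<in> C"
  by (induction m) auto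
lemma npow_add: "a \<in> C \<Longrightarrow> sf_npow P a (p + q) = mul (sf_npow P a p) (sf_npow P a q)"
  by (induction p) (auto simp: mul_assoc)
lemma ipow_in[simp]: "a \<in> C \<Longrightarrow> sf_ipow P a k \<in> C"
  by (simp add: sf_ipow_def)

lemma mul_4: "a \<in> C \<Longrightarrow> b \<in> C \<Longrightarrow> c \<in> C \<Longrightarrow> d \<in> C \<Longrightarrow>
   mul (mul a b) (mul c d) = mul (mul a c) (mul b d)"
  using mul_lcomm[of b c d] by (simp add: mul_assoc)
lemma add_lcomm: "a \<in> C \<Longrightarrow> b \<in> C \<Longrightarrow> c \<in> C \<Longrightarrow> add a (add b c) = add b (add a c)"
  by (metis add_assoc add_comm)

end

definition madd :: "(nat \<Rightarrow> nat) \<Rightarrow> (nat \<Rightarrow> nat) \<Rightarrow> nat \<Rightarrow> nat" where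
  "madd a b = (\<lambda>i. a i + b i)"

fun smon :: "('q,'b) semifield_scheme \<Rightarrow> (nat \<Rightarrow> 'q) \<Rightarrow> (nat \<Rightarrow> nat) \<Rightarrow> nat \<Rightarrow> 'q" where
  "smon P z m 0 = sf_one P"
| "smon P z m (Suc j) = sf_mult P (smon P z m j) (sf_npow P (z j) (m j))"

fun sev :: "('q,'b) semifield_scheme \<Rightarrow> (nat \<Rightarrow> 'q) \<Rightarrow> nat \<Rightarrow> (nat \<Rightarrow> nat) list \<Rightarrow> 'q" where
  "sev P z n [] = sf_one P"
| "sev P z n [m] = smon P z m n"
| "sev P z n (m # m2 # ms) = sf_add P (smon P z m n) (sev P z n (m2 # ms))"

definition prodl :: "(nat \<Rightarrow> nat) list \<Rightarrow> (nat \<Rightarrow> nat) list \<Rightarrow> (nat \<Rightarrow> nat) list" where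
  "prodl l1 l2 = concat (map (\<lambda>a. map (madd a) l2) l1)"

lemma prodl_Cons: "prodl (a # r) l2 = map (madd a) l2 @ prodl r l2"
  by (simp add: prodl_def)
lemma prodl_Nil: "prodl [] l2 = []" by (simp add: prodl_def)
lemma prodl_ne: "l1 \<noteq> [] \<Longrightarrow> l2 \<noteq> [] \<Longrightarrow> prodl l1 l2 \<noteq> []"
  by (cases l1; cases l2) (auto simp: prodl_def)

locale sfz = sfld +
  fixes z :: "nat \<Rightarrow> _" and n :: nat
  assumes zC: "\<And>i. z i \<in> C"
begin

abbreviation "sm m \<equiv> smon P z m n"
abbreviation "se l \<equiv> sev P z n l"

lemma smon_in[simp]: "smon P z m j \<in> C"
  by (induction j) (auto simp: zC)
lemma sev_in[simp]: "sev P z n l \<in> C"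
proof (induction l)
  case (Cons a l) then show ?case by (cases l) auto
qed simp
lemma smon_madd: "smon P z (madd m1 m2) j = mul (smon P z m1 j) (smon P z m2 j)"
proof (induction j)
  case (Suc j)
  then show ?case
    using mul_4[of "smon P z m1 j" "smon P z m2 j" "sf_npow P (z j) (m1 j)" "sf_npow P (z j) (m2 j)"]
    by (simp add: madd_def npow_add zC)
qed simp
lemma sev_Cons: "ms \<noteq> [] \<Longrightarrow> se (m # ms) = add (sm m) (se ms)"
  by (cases ms) auto
lemma sev_append: "l1 \<noteq> [] \<Longrightarrow> l2 \<noteq> [] \<Longrightarrow> se (l1 @ l2) = add (se l1) (se l2)"
proof (induction l1)
  case (Cons a r)
  show ?case
  proof (cases "r = []")
    case True then show ?thesis using Cons by (simp add: sev_Cons)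
  next
    case False
    then have "se ((a # r) @ l2) = add (sm a) (add (se r) (se l2))"
      using Cons by (simp add: sev_Cons)
    also have "\<dots> = add (se (a # r)) (se l2)" using False by (simp add: sev_Cons add_assoc)
    finally show ?thesis .
  qed
qed simp
lemma sev_remove1: "a \<in> set l \<Longrightarrow> remove1 a l \<noteq> [] \<Longrightarrow> se l = add (sm a) (se (remove1 a l))"
proof -
  assume a: "a \<in> set l" and ne: "remove1 a l \<noteq> []"
  obtain xs ys where l: "l = xs @ a # ys" and xs: "a \<notin> set xs" using split_list_first[OF a] by blast
  have r: "remove1 a l = xs @ ys" using l xs by (simp add: remove1_append)
  show ?thesis
  proof (cases "xs = []")
    case True then show ?thesis using l r ne by (simp add: sev_Cons)
  next
    case xne: False
    show ?thesis
    proof (cases "ys = []")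
      case True then show ?thesis using l r xne add_comm[of "se xs" "sm a"] by (simp add: sev_append)
    next
      case False
      have "se l = add (se xs) (add (sm a) (se ys))" using l xne False by (simp add: sev_append sev_Cons)
      also have "\<dots> = add (sm a) (add (se xs) (se ys))" by (rule add_lcomm) simp_all
      also have "\<dots> = add (sm a) (se (remove1 a l))" using r xne False by (simp add: sev_append)
      finally show ?thesis .
    qed
  qed
qed
lemma sev_mset: "mset l1 = mset l2 \<Longrightarrow> se l1 = se l2"
proof (induction l1 arbitrary: l2)
  case Nil then show ?case by simp
next
  case (Cons a r)
  have a: "a \<in> set l2" using mset_eq_setD[OF Cons.prems] by auto
  have m: "mset r = mset (remove1 a l2)" using Cons.prems
    by (metis add_mset_remove_trivial mset.simps(2) mset_remove1)
  show ?case
  proof (cases "r = []")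
    case True
    then have "l2 = [a]" using Cons.prems by simp
    then show ?thesis using True by simp
  next
    case False
    have ne: "remove1 a l2 \<noteq> []"
    proof
      assume "remove1 a l2 = []"
      then have "mset r = {#}" using m by (simp del: mset_remove1)
      then show False using False by simp
    qed
    have "se (a # r) = add (sm a) (se r)" using False by (simp add: sev_Cons)
    also have "se r = se (remove1 a l2)" using Cons.IH m by blast
    finally show ?thesis using sev_remove1[OF a ne] by simp
  qed
qed
lemma sev_map_madd: "l \<noteq> [] \<Longrightarrow> se (map (madd a) l) = mul (sm a) (se l)"
proof (induction l)
  case (Cons m ms)
  show ?case
  proof (cases "ms = []")
    case True then show ?thesis by (simp add: smon_madd)
  next
    case False
    then show ?thesis using Cons by (simp add: sev_Cons smon_madd distl)
  qed
qed simp
lemma sev_prodl: "l1 \<noteq> [] \<Longrightarrow> l2 \<noteq> [] \<Longrightarrow> se (prodl l1 l2) = mul (se l1) (se l2)"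
proof (induction l1)
  case (Cons a r)
  show ?case
  proof (cases "r = []")
    case True then show ?thesis using Cons by (simp add: prodl_Cons prodl_Nil sev_map_madd)
  next
    case False
    have "se (prodl (a # r) l2) = add (mul (sm a) (se l2)) (mul (se r) (se l2))"
      using Cons False by (simp add: prodl_Cons sev_append sev_map_madd prodl_ne)
    also have "\<dots> = mul (se (a # r)) (se l2)" using False by (simp add: distr sev_Cons)
    finally show ?thesis .
  qed
qed simp

end



definition kmon :: "nat \<Rightarrow> (nat \<Rightarrow> 'k::field) \<Rightarrow> (nat \<Rightarrow> nat) \<Rightarrow> 'k" where
  "kmon n y m = (\<Prod>i<n. y i ^ m i)"
definition kev :: "nat \<Rightarrow> (nat \<Rightarrow> 'k::field) \<Rightarrow> (nat \<Rightarrow> nat) list \<Rightarrow> 'k" where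
  "kev n y l = sum_list (map (kmon n y) l)"

lemma kmon_madd: "kmon n y (madd a b) = kmon n y a * kmon n y b"
  by (simp add: kmon_def madd_def power_add prod.distrib)
lemma kev_Nil[simp]: "kev n y [] = 0" by (simp add: kev_def)
lemma kev_Cons: "kev n y (a # l) = kmon n y a + kev n y l" by (simp add: kev_def)
lemma kev_append: "kev n y (l1 @ l2) = kev n y l1 + kev n y l2" by (simp add: kev_def)
lemma kev_map_madd: "kev n y (map (madd a) l) = kmon n y a * kev n y l"
  by (induction l) (auto simp: kev_def kmon_madd algebra_simps)
lemma kev_prodl: "kev n y (prodl l1 l2) = kev n y l1 * kev n y l2"
proof (induction l1)
  case (Cons a l1)
  then show ?case by (simp add: prodl_Cons kev_append kev_map_madd distrib_right kev_Cons)
qed (simp add: prodl_Nil)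

lemma kev_count: "finite U \<Longrightarrow> set l \<subseteq> U \<Longrightarrow> kev n y l = (\<Sum>m\<in>U. of_nat (count_list l m) * kmon n y m)"
proof (induction l)
  case (Cons a l)
  have "(\<Sum>m\<in>U. of_nat (count_list (a#l) m) * kmon n y m) =
        (\<Sum>m\<in>U. (if a = m then kmon n y m else 0) + of_nat (count_list l m) * kmon n y m)"
    by (rule sum.cong) (auto simp: distrib_right)
  also have "\<dots> = kmon n y a + (\<Sum>m\<in>U. of_nat (count_list l m) * kmon n y m)"
    using Cons.prems by (simp add: sum.distrib sum.delta)
  finally show ?case using Cons by (simp add: kev_Cons)
qed simp

lemma madd_mon: "a \<in> monomials n \<Longrightarrow> b \<in> monomials n \<Longrightarrow> madd a b \<in> monomials n"
  by (simp add: monomials_def madd_def)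
lemma prodl_mon: "set l1 \<subseteq> monomials n \<Longrightarrow> set l2 \<subseteq> monomials n \<Longrightarrow> set (prodl l1 l2) \<subseteq> monomials n"
  unfolding prodl_def using madd_mon by fastforce

locale kside =
  fixes n :: nat and y :: "nat \<Rightarrow> 'k::field_char_0"
  assumes rff: "rational_function_field n y"
begin

lemma kev_inj:
  assumes m1: "set l1 \<subseteq> monomials n" and m2: "set l2 \<subseteq> monomials n"
    and e: "kev n y l1 = kev n y l2"
  shows "mset l1 = mset l2"
proof -
  define c :: "(nat \<Rightarrow> nat) \<Rightarrow> rat" where
    "c m = of_nat (count_list l1 m) - of_nat (count_list l2 m)" for m
  define U where "U = set l1 \<union> set l2"
  have fU: "finite U" by (simp add: U_def)
  have supp: "{m. c m \<noteq> 0} \<subseteq> U"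
  proof
    fix m assume "m \<in> {m. c m \<noteq> 0}"
    then have "count_list l1 m \<noteq> 0 \<or> count_list l2 m \<noteq> 0" by (auto simp: c_def)
    then show "m \<in> U" by (auto simp: U_def count_list_0_iff)
  qed
  have fp: "fin_poly n c" unfolding fin_poly_def
    using supp fU m1 m2 by (auto simp: U_def intro: finite_subset)
  have supp2: "{m. (of_rat (c m) :: 'k) \<noteq> 0} = {m. c m \<noteq> 0}" by simp
  have "poly_eval n (\<lambda>m. of_rat (c m)) y = (\<Sum>m\<in>U. of_rat (c m) * kmon n y m)"
    unfolding poly_eval_def supp2 kmon_def[symmetric]
    by (rule sum.mono_neutral_left[OF fU supp]) auto
  also have "\<dots> = (\<Sum>m\<in>U. of_nat (count_list l1 m) * kmon n y m) - (\<Sum>m\<in>U. of_nat (count_list l2 m) * kmon n y m)"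
    by (simp add: c_def of_rat_diff algebra_simps sum_subtractf)
  also have "\<dots> = kev n y l1 - kev n y l2"
    using kev_count[OF fU, of l1 n y] kev_count[OF fU, of l2 n y] by (simp add: U_def)
  finally have "poly_eval n (\<lambda>m. of_rat (c m)) y = 0" using e by simp
  then have "\<forall>m. c m = 0" using rff fp unfolding rational_function_field_def by blast
  then show ?thesis by (auto simp: c_def multiset_eq_iff count_mset)
qed

lemma kev_ne0: "l \<noteq> [] \<Longrightarrow> set l \<subseteq> monomials n \<Longrightarrow> kev n y l \<noteq> 0"
  using kev_inj[of l "[]"] by auto

definition rep :: "(nat \<Rightarrow> nat) list \<Rightarrow> (nat \<Rightarrow> nat) list \<Rightarrow> 'k \<Rightarrow> bool" where
  "rep l1 l2 z \<longleftrightarrow> l1 \<noteq> [] \<and> l2 \<noteq> [] \<and> set l1 \<subseteq> monomials n \<and> set l2 \<subseteq> monomials n \<and>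
     z = kev n y l1 / kev n y l2"

lemma nn_poly_list:
  assumes p: "nn_poly n p"
  shows "\<exists>l. l \<noteq> [] \<and> set l \<subseteq> monomials n \<and> poly_eval n p y = kev n y l"
proof -
  define S where "S = {m. p m \<noteq> 0}"
  have fS: "finite S" and Sm: "S \<subseteq> monomials n" using p by (auto simp: nn_poly_def fin_poly_def S_def)
  obtain ms where ms: "set ms = S" "distinct ms" using finite_distinct_list[OF fS] by blast
  define a where "a m = (SOME a. p m = of_nat a)" for m
  have pa: "p m = of_nat (a m)" for m
    unfolding a_def by (rule someI_ex) (use p in \<open>auto simp: nn_poly_def\<close>)
  define l where "l = concat (map (\<lambda>m. replicate (a m) m) ms)"
  have kl: "kev n y l = sum_list (map (\<lambda>m. of_nat (a m) * kmon n y m) ms)"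
    unfolding l_def by (induction ms) (auto simp: kev_def sum_list_replicate)
  also have "\<dots> = (\<Sum>m\<in>S. p m * kmon n y m)"
    using ms by (simp add: sum_list_distinct_conv_sum_set pa)
  also have "\<dots> = poly_eval n p y" by (simp add: poly_eval_def S_def kmon_def)
  finally have 1: "poly_eval n p y = kev n y l" by simp
  obtain m0 where "p m0 \<noteq> 0" using p by (auto simp: nn_poly_def)
  then have "m0 \<in> S" "a m0 \<noteq> 0" using pa by (auto simp: S_def)
  then have "m0 \<in> set l" using ms by (auto simp: l_def)
  moreover have "set l \<subseteq> monomials n" using Sm ms by (auto simp: l_def)
  ultimately have "l \<noteq> [] \<and> set l \<subseteq> monomials n \<and> poly_eval n p y = kev n y l" using 1 by auto
  then show ?thesis by blast
qed

lemma carrier_rep: "z \<in> univ_sf_carrier n y \<Longrightarrow> \<exists>l1 l2. rep l1 l2 z"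
proof -
  assume "z \<in> univ_sf_carrier n y"
  then obtain p q where pq: "nn_poly n p" "nn_poly n q" "z = poly_eval n p y / poly_eval n q y"
    unfolding univ_sf_carrier_def by blast
  obtain l1 where l1: "l1 \<noteq> []" "set l1 \<subseteq> monomials n" "poly_eval n p y = kev n y l1"
    using nn_poly_list[OF pq(1)] by blast
  obtain l2 where l2: "l2 \<noteq> []" "set l2 \<subseteq> monomials n" "poly_eval n q y = kev n y l2"
    using nn_poly_list[OF pq(2)] by blast
  show ?thesis using l1 l2 pq(3) unfolding rep_def by metis
qed

lemma rep_ne0: "rep l1 l2 z \<Longrightarrow> z \<noteq> 0"
  by (auto simp: rep_def kev_ne0)

end



locale sfhom = A: sfld PA + B: sfld PB for PA :: "('a, 'c) semifield_scheme" and PB :: "('b, 'd) semifield_scheme" +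
  fixes h :: "'a \<Rightarrow> 'b"
  assumes h_in: "a \<in> A.C \<Longrightarrow> h a \<in> B.C"
    and h_mul: "a \<in> A.C \<Longrightarrow> b \<in> A.C \<Longrightarrow> h (A.mul a b) = B.mul (h a) (h b)"
    and h_add: "a \<in> A.C \<Longrightarrow> b \<in> A.C \<Longrightarrow> h (A.add a b) = B.add (h a) (h b)"
    and h_inv: "a \<in> A.C \<Longrightarrow> h (A.inv' a) = B.inv' (h a)"
    and h_one: "h A.one = B.one"
begin
lemma h_npow: "a \<in> A.C \<Longrightarrow> h (sf_npow PA a m) = sf_npow PB (h a) m"
  by (induction m) (auto simp: h_mul h_one)
lemma h_ipow: "a \<in> A.C \<Longrightarrow> h (sf_ipow PA a k) = sf_ipow PB (h a) k"
  by (simp add: sf_ipow_def h_npow h_inv)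
lemma h_mut_y: "Ys k \<in> A.C \<Longrightarrow> Ys i \<in> A.C \<Longrightarrow>
   h (mut_y PA k Ys Bs i) = mut_y PB k (\<lambda>j. h (Ys j)) Bs i"
  by (simp add: mut_y_def h_inv h_mul h_ipow h_add h_one)
end

locale ctx = kside n y for n and y :: "nat \<Rightarrow> 'k::field_char_0" +
  fixes \<iota> :: "'k \<Rightarrow> 'f::field"
    and X :: "nat list \<Rightarrow> nat \<Rightarrow> 'f"
    and Y :: "nat list \<Rightarrow> nat \<Rightarrow> 'k"
    and B :: "nat list \<Rightarrow> nat \<Rightarrow> nat \<Rightarrow> int"
    and P' :: "'q semifield"
    and \<iota>' :: "'q \<Rightarrow> 'g::field"
    and X' :: "nat list \<Rightarrow> nat \<Rightarrow> 'g"
    and Y' :: "nat list \<Rightarrow> nat \<Rightarrow> 'q"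
    and B' :: "nat list \<Rightarrow> nat \<Rightarrow> nat \<Rightarrow> int"
    and t0 :: "nat list"
  assumes t0v: "tree_vertex n t0"
    and cp: "cluster_pattern (univ_semifield n y) \<iota> n X Y B"
    and Y0: "\<forall>i<n. Y t0 i = y i"
    and cp': "cluster_pattern P' \<iota>' n X' Y' B'"
    and BB: "\<forall>s. tree_vertex n s \<longrightarrow> (\<forall>i<n. \<forall>j<n. B' s i j = B s i j)"
begin

abbreviation "U \<equiv> univ_semifield n y"
abbreviation "zz \<equiv> (\<lambda>i. if i < n then Y' t0 i else sf_one P')"

lemma sfU: "is_semifield U" using cp by (simp add: cluster_pattern_def)
lemma sfP': "is_semifield P'" using cp' by (simp add: cluster_pattern_def)
lemma seed': "tree_vertex n s \<Longrightarrow> is_seed P' \<iota>' n (X' s) (Y' s) (B' s)"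
  using cp' by (simp add: cluster_pattern_def)
lemma seed: "tree_vertex n s \<Longrightarrow> is_seed U \<iota> n (X s) (Y s) (B s)"
  using cp by (simp add: cluster_pattern_def)

sublocale S: sfz P' zz n
proof
  show "is_semifield P'" by (rule sfP')
  fix i show "zz i \<in> sf_carrier P'"
    using seed'[OF t0v] by (auto simp: is_seed_def sfld.one_in[OF sfld.intro[OF sfP']])
qed

sublocale UU: sfld U by (rule sfld.intro[OF sfU])

lemma U_simps[simp]: "sf_carrier U = univ_sf_carrier n y" "sf_mult U = (*)" "sf_add U = (+)"
  "sf_one U = 1" "sf_inv U = inverse"
  by (simp_all add: univ_semifield_def)

definition phi :: "'k \<Rightarrow> 'q" where
  "phi w = (SOME v. \<exists>l1 l2. rep l1 l2 w \<and> v = S.mul (S.se l1) (S.inv' (S.se l2)))"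

lemma phi_rep: assumes r: "rep l1 l2 w" shows "phi w = S.mul (S.se l1) (S.inv' (S.se l2))"
proof -
  have "\<exists>v. \<exists>l1 l2. rep l1 l2 w \<and> v = S.mul (S.se l1) (S.inv' (S.se l2))" using r by blast
  from someI_ex[OF this] obtain l3 l4 where r2: "rep l3 l4 w" and
    p: "phi w = S.mul (S.se l3) (S.inv' (S.se l4))" unfolding phi_def by blast
  have ne: "kev n y l2 \<noteq> 0" "kev n y l4 \<noteq> 0" using r r2 by (auto simp: rep_def kev_ne0)
  have "kev n y l1 / kev n y l2 = kev n y l3 / kev n y l4" using r r2 by (simp add: rep_def)
  then have "kev n y l1 * kev n y l4 = kev n y l3 * kev n y l2" using ne by (simp add: field_simps)
  then have "kev n y (prodl l1 l4) = kev n y (prodl l3 l2)" by (simp add: kev_prodl)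
  then have "mset (prodl l1 l4) = mset (prodl l3 l2)"
    using r r2 by (intro kev_inj prodl_mon) (auto simp: rep_def)
  then have "S.se (prodl l1 l4) = S.se (prodl l3 l2)" by (rule S.sev_mset)
  then have "S.mul (S.se l1) (S.se l4) = S.mul (S.se l3) (S.se l2)"
    using r r2 by (simp add: S.sev_prodl rep_def)
  then have "S.mul (S.se l1) (S.inv' (S.se l2)) = S.mul (S.se l3) (S.inv' (S.se l4))"
    by (intro S.frac_eq) auto
  then show ?thesis using p by simp
qed

lemma rep_mul: "rep l1 l2 a \<Longrightarrow> rep l3 l4 b \<Longrightarrow> rep (prodl l1 l3) (prodl l2 l4) (a * b)"
  by (auto simp: rep_def prodl_ne prodl_mon kev_prodl)
lemma rep_add: "rep l1 l2 a \<Longrightarrow> rep l3 l4 b \<Longrightarrow> rep (prodl l1 l4 @ prodl l3 l2) (prodl l2 l4) (a + b)"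
proof -
  assume r: "rep l1 l2 a" "rep l3 l4 b"
  then have ne: "kev n y l2 \<noteq> 0" "kev n y l4 \<noteq> 0" by (auto simp: rep_def kev_ne0)
  show ?thesis using r ne
    by (auto simp: rep_def prodl_ne prodl_mon kev_prodl kev_append add_frac_eq mult.commute)
qed
lemma rep_inv: "rep l1 l2 a \<Longrightarrow> rep l2 l1 (inverse a)"
  by (auto simp: rep_def)

definition zm :: "nat \<Rightarrow> nat" where "zm = (\<lambda>_. 0)"
definition em :: "nat \<Rightarrow> nat \<Rightarrow> nat" where "em i = (\<lambda>j. if j = i then 1 else 0)"

lemma smon_zm: "smon P' z zm j = S.one"
  by (induction j) (auto simp: zm_def)
lemma smon_em: "smon P' zz (em i) j = (if i < j then zz i else S.one)"
  using S.zC[of i] by (induction j) (auto simp: em_def smon_zm)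

lemma rep_one: "rep [zm] [zm] 1"
  by (auto simp: rep_def zm_def monomials_def kev_def kmon_def)
lemma rep_y: "i < n \<Longrightarrow> rep [em i] [zm] (y i)"
proof -
  assume i: "i < n"
  have "kmon n y (em i) = (\<Prod>j<n. if j = i then y j else 1)"
    unfolding kmon_def em_def by (rule prod.cong) auto
  also have "\<dots> = y i" using i by (simp add: prod.delta)
  finally show ?thesis using i by (auto simp: rep_def zm_def em_def monomials_def kev_def kmon_def)
qed

lemma phi_one: "phi 1 = S.one"
  using phi_rep[OF rep_one] by simp
lemma phi_y: "i < n \<Longrightarrow> phi (y i) = Y' t0 i"
  using phi_rep[OF rep_y] S.zC[of i] by (simp add: smon_em smon_zm)

lemma phi_in: "a \<in> univ_sf_carrier n y \<Longrightarrow> phi a \<in> S.C"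
  using carrier_rep phi_rep by fastforce

lemma phi_mul: "a \<in> univ_sf_carrier n y \<Longrightarrow> b \<in> univ_sf_carrier n y \<Longrightarrow> phi (a * b) = S.mul (phi a) (phi b)"
proof -
  assume "a \<in> univ_sf_carrier n y" "b \<in> univ_sf_carrier n y"
  then obtain l1 l2 l3 l4 where r: "rep l1 l2 a" "rep l3 l4 b" using carrier_rep by meson
  then have ne: "l1 \<noteq> []" "l2 \<noteq> []" "l3 \<noteq> []" "l4 \<noteq> []" by (auto simp: rep_def)
  have "phi (a * b) = S.mul (S.mul (S.se l1) (S.se l3)) (S.mul (S.inv' (S.se l2)) (S.inv' (S.se l4)))"
    using phi_rep[OF rep_mul[OF r]] ne by (simp add: S.sev_prodl S.inv_mul)
  also have "\<dots> = S.mul (S.mul (S.se l1) (S.inv' (S.se l2))) (S.mul (S.se l3) (S.inv' (S.se l4)))"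
    by (rule S.mul_4) auto
  finally show ?thesis using phi_rep r by simp
qed

lemma phi_inv: "a \<in> univ_sf_carrier n y \<Longrightarrow> phi (inverse a) = S.inv' (phi a)"
proof -
  assume "a \<in> univ_sf_carrier n y"
  then obtain l1 l2 where r: "rep l1 l2 a" using carrier_rep by meson
  have "S.inv' (phi a) = S.mul (S.inv' (S.se l1)) (S.se l2)"
    using phi_rep[OF r] by (simp add: S.inv_mul S.inv_inv)
  also have "\<dots> = phi (inverse a)" using phi_rep[OF rep_inv[OF r]] by (simp add: S.mul_comm)
  finally show ?thesis by simp
qed

lemma phi_add: "a \<in> univ_sf_carrier n y \<Longrightarrow> b \<in> univ_sf_carrier n y \<Longrightarrow> phi (a + b) = S.add (phi a) (phi b)"
proof -
  assume "a \<in> univ_sf_carrier n y" "b \<in> univ_sf_carrier n y"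
  then obtain l1 l2 l3 l4 where r: "rep l1 l2 a" "rep l3 l4 b" using carrier_rep by meson
  then have ne: "l1 \<noteq> []" "l2 \<noteq> []" "l3 \<noteq> []" "l4 \<noteq> []" by (auto simp: rep_def)
  define s1 where "s1 = S.se l1"
  define s2 where "s2 = S.se l2"
  define s3 where "s3 = S.se l3"
  define s4 where "s4 = S.se l4"
  have c: "s1 \<in> S.C" "s2 \<in> S.C" "s3 \<in> S.C" "s4 \<in> S.C" by (auto simp: s1_def s2_def s3_def s4_def)
  have "phi (a + b) = S.mul (S.add (S.mul s1 s4) (S.mul s3 s2)) (S.mul (S.inv' s2) (S.inv' s4))"
    using phi_rep[OF rep_add[OF r]] ne
    by (simp add: S.sev_prodl S.inv_mul S.sev_append prodl_ne s1_def s2_def s3_def s4_def)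
  also have "\<dots> = S.add (S.mul (S.mul s1 s4) (S.mul (S.inv' s2) (S.inv' s4)))
                         (S.mul (S.mul s3 s2) (S.mul (S.inv' s2) (S.inv' s4)))"
    using c by (simp add: S.distr)
  also have "S.mul (S.mul s1 s4) (S.mul (S.inv' s2) (S.inv' s4)) = S.mul (S.mul s1 (S.inv' s2)) (S.mul s4 (S.inv' s4))"
    using c by (intro S.mul_4) auto
  also have "S.mul (S.mul s3 s2) (S.mul (S.inv' s2) (S.inv' s4)) = S.mul (S.mul s2 s3) (S.mul (S.inv' s2) (S.inv' s4))"
    using c by (simp add: S.mul_comm)
  also have "\<dots> = S.mul (S.mul s2 (S.inv' s2)) (S.mul s3 (S.inv' s4))"
    using c by (intro S.mul_4) auto
  finally have "phi (a + b) = S.add (S.mul s1 (S.inv' s2)) (S.mul s3 (S.inv' s4))" using c by simp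
  then show ?thesis using phi_rep r by (simp add: s1_def s2_def s3_def s4_def)
qed

sublocale H: sfhom U P' phi
proof (unfold_locales)
  fix a b assume "a \<in> sf_carrier U" "b \<in> sf_carrier U"
  then show "phi (sf_mult U a b) = sf_mult P' (phi a) (phi b)"
    "phi (sf_add U a b) = sf_add P' (phi a) (phi b)" by (simp_all add: phi_mul phi_add)
next
  fix a assume "a \<in> sf_carrier U"
  then show "phi a \<in> sf_carrier P'" "phi (sf_inv U a) = sf_inv P' (phi a)" by (simp_all add: phi_in phi_inv)
next
  show "phi (sf_one U) = sf_one P'" by (simp add: phi_one)
qed

end



lemma regroup:
  fixes G :: "'r \<Rightarrow> 'x::comm_ring_1"
  assumes fA: "finite A"
  shows "(\<Sum>s\<in>A. of_int (a s) * G (f s)) = (\<Sum>r\<in>f ` A. of_int (\<Sum>s\<in>{s\<in>A. f s = r}. a s) * G r)"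
proof -
  have "(\<Sum>s\<in>A. of_int (a s) * G (f s)) = (\<Sum>r\<in>f ` A. \<Sum>s\<in>{s\<in>A. f s = r}. of_int (a s) * G (f s))"
    by (rule sum.image_gen[OF fA])
  also have "\<dots> = (\<Sum>r\<in>f ` A. of_int (\<Sum>s\<in>{s\<in>A. f s = r}. a s) * G r)"
    by (rule sum.cong) (auto simp: of_int_sum sum_distrib_right)
  finally show ?thesis .
qed

context ctx
begin

abbreviation "Cu \<equiv> univ_sf_carrier n y"

definition Gf :: "'k \<times> (nat \<Rightarrow> nat) \<Rightarrow> 'f" where
  "Gf r = \<iota> (fst r) * (\<Prod>i<n. X t0 i ^ snd r i)"
definition Gg :: "'k \<times> (nat \<Rightarrow> nat) \<Rightarrow> 'g" where
  "Gg r = \<iota>' (phi (fst r)) * (\<Prod>i<n. X' t0 i ^ snd r i)"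

definition NF :: "('f \<times> 'g) set" where
  "NF = {((\<Sum>r\<in>S. of_int (c r) * Gf r), (\<Sum>r\<in>S. of_int (c r) * Gg r)) | S c.
          finite S \<and> S \<subseteq> Cu \<times> monomials n}"

lemma emb: "coeff_embedding U \<iota>" using cp by (simp add: cluster_pattern_def)
lemma emb': "coeff_embedding P' \<iota>'" using cp' by (simp add: cluster_pattern_def)

lemma iota_mul: "a \<in> Cu \<Longrightarrow> b \<in> Cu \<Longrightarrow> \<iota> (a * b) = \<iota> a * \<iota> b"
  using emb by (simp add: coeff_embedding_def)
lemma iota_one: "\<iota> 1 = 1"
  using emb by (simp add: coeff_embedding_def)
lemma iota'_mul: "a \<in> S.C \<Longrightarrow> b \<in> S.C \<Longrightarrow> \<iota>' (S.mul a b) = \<iota>' a * \<iota>' b"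
  using emb' by (simp add: coeff_embedding_def)
lemma iota'_one: "\<iota>' S.one = 1"
  using emb' by (simp add: coeff_embedding_def)
lemma iota'_nz: "a \<in> S.C \<Longrightarrow> \<iota>' a \<noteq> 0"
proof
  assume a: "a \<in> S.C" "\<iota>' a = 0"
  have "1 = \<iota>' (S.mul (S.inv' a) a)" using a(1) iota'_one by simp
  also have "\<dots> = \<iota>' (S.inv' a) * \<iota>' a" by (rule iota'_mul) (use a(1) in simp_all)
  finally show False using a by simp
qed
lemma Cu_mul: "a \<in> Cu \<Longrightarrow> b \<in> Cu \<Longrightarrow> a * b \<in> Cu"
  using UU.mul_in by simp
lemma Cu_one: "1 \<in> Cu"
  using UU.one_in by simp

lemma NF_I: "finite S \<Longrightarrow> S \<subseteq> Cu \<times> monomials n \<Longrightarrow>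
   ((\<Sum>r\<in>S. of_int (c r) * Gf r), (\<Sum>r\<in>S. of_int (c r) * Gg r)) \<in> NF"
  unfolding NF_def by blast

lemma nf_gen:
  assumes fA: "finite A" and fA2: "f ` A \<subseteq> Cu \<times> monomials n"
  shows "((\<Sum>s\<in>A. of_int (a s) * Gf (f s)), (\<Sum>s\<in>A. of_int (a s) * Gg (f s))) \<in> NF"
  unfolding regroup[OF fA, of a Gf f] regroup[OF fA, of a Gg f]
  by (rule NF_I) (use fA fA2 in auto)

lemma nf_add: assumes "(u, v) \<in> NF" "(u', v') \<in> NF" shows "(u + u', v + v') \<in> NF"
proof -
  obtain S c where S: "finite S" "S \<subseteq> Cu \<times> monomials n"
    "u = (\<Sum>r\<in>S. of_int (c r) * Gf r)" "v = (\<Sum>r\<in>S. of_int (c r) * Gg r)"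
    using assms(1) unfolding NF_def by blast
  obtain S' c' where S': "finite S'" "S' \<subseteq> Cu \<times> monomials n"
    "u' = (\<Sum>r\<in>S'. of_int (c' r) * Gf r)" "v' = (\<Sum>r\<in>S'. of_int (c' r) * Gg r)"
    using assms(2) unfolding NF_def by blast
  define f :: "('k \<times> (nat \<Rightarrow> nat)) + ('k \<times> (nat \<Rightarrow> nat)) \<Rightarrow> 'k \<times> (nat \<Rightarrow> nat)" where
    "f = case_sum id id"
  define a where "a = case_sum c c'"
  have "((\<Sum>s\<in>S <+> S'. of_int (a s) * Gf (f s)), (\<Sum>s\<in>S <+> S'. of_int (a s) * Gg (f s))) \<in> NF"
    using S S' by (intro nf_gen) (auto simp: f_def)
  then show ?thesis using S S' by (simp add: sum.Plus f_def a_def comp_def)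
qed

lemma nf_neg: assumes "(u, v) \<in> NF" shows "(- u, - v) \<in> NF"
proof -
  obtain S c where S: "finite S" "S \<subseteq> Cu \<times> monomials n"
    "u = (\<Sum>r\<in>S. of_int (c r) * Gf r)" "v = (\<Sum>r\<in>S. of_int (c r) * Gg r)"
    using assms(1) unfolding NF_def by blast
  have "((\<Sum>r\<in>S. of_int (- c r) * Gf r), (\<Sum>r\<in>S. of_int (- c r) * Gg r)) \<in> NF"
    using S by (intro NF_I) auto
  then show ?thesis using S by (simp add: sum_negf)
qed

lemma Gf_mul: "r \<in> Cu \<times> monomials n \<Longrightarrow> r' \<in> Cu \<times> monomials n \<Longrightarrow>
   Gf (fst r * fst r', madd (snd r) (snd r')) = Gf r * Gf r'"
  by (auto simp: Gf_def iota_mul madd_def power_add prod.distrib)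
lemma Gg_mul: "r \<in> Cu \<times> monomials n \<Longrightarrow> r' \<in> Cu \<times> monomials n \<Longrightarrow>
   Gg (fst r * fst r', madd (snd r) (snd r')) = Gg r * Gg r'"
  by (auto simp: Gg_def phi_mul iota'_mul phi_in madd_def power_add prod.distrib)

lemma nf_mul: assumes "(u, v) \<in> NF" "(u', v') \<in> NF" shows "(u * u', v * v') \<in> NF"
proof -
  obtain S c where S: "finite S" "S \<subseteq> Cu \<times> monomials n"
    "u = (\<Sum>r\<in>S. of_int (c r) * Gf r)" "v = (\<Sum>r\<in>S. of_int (c r) * Gg r)"
    using assms(1) unfolding NF_def by blast
  obtain S' c' where S': "finite S'" "S' \<subseteq> Cu \<times> monomials n"
    "u' = (\<Sum>r\<in>S'. of_int (c' r) * Gf r)" "v' = (\<Sum>r\<in>S'. of_int (c' r) * Gg r)"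
    using assms(2) unfolding NF_def by blast
  define f where "f = (\<lambda>(r :: 'k \<times> (nat \<Rightarrow> nat), r' :: 'k \<times> (nat \<Rightarrow> nat)). (fst r * fst r', madd (snd r) (snd r')))"
  define a where "a = (\<lambda>(r, r'). c r * c' r')"
  have fim: "f ` (S \<times> S') \<subseteq> Cu \<times> monomials n"
    unfolding image_subset_iff
  proof
    fix s assume "s \<in> S \<times> S'"
    then have "fst (fst s) \<in> Cu" "snd (fst s) \<in> monomials n" "fst (snd s) \<in> Cu" "snd (snd s) \<in> monomials n"
      using S(2) S'(2) by auto
    then show "f s \<in> Cu \<times> monomials n" by (auto simp: f_def case_prod_beta Cu_mul madd_mon)
  qed
  have "((\<Sum>s\<in>S \<times> S'. of_int (a s) * Gf (f s)), (\<Sum>s\<in>S \<times> S'. of_int (a s) * Gg (f s))) \<in> NF"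
    using S S' fim by (intro nf_gen) auto
  moreover have "(\<Sum>s\<in>S \<times> S'. of_int (a s) * Gf (f s)) = u * u'"
  proof -
    have "(\<Sum>s\<in>S \<times> S'. of_int (a s) * Gf (f s)) = (\<Sum>s\<in>S \<times> S'. (of_int (c (fst s)) * Gf (fst s)) * (of_int (c' (snd s)) * Gf (snd s)))"
    proof (rule sum.cong[OF refl])
      fix s assume s: "s \<in> S \<times> S'"
      then have m: "fst s \<in> Cu \<times> monomials n" "snd s \<in> Cu \<times> monomials n"
        using S(2) S'(2) by (auto simp: mem_Times_iff)
      show "of_int (a s) * Gf (f s) = (of_int (c (fst s)) * Gf (fst s)) * (of_int (c' (snd s)) * Gf (snd s))"
        using Gf_mul[OF m] by (simp add: a_def f_def case_prod_beta mult_ac)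
    qed
    also have "\<dots> = u * u'" unfolding S(3) S'(3) sum_product sum.cartesian_product by (simp add: case_prod_beta)
    finally show ?thesis .
  qed
  moreover have "(\<Sum>s\<in>S \<times> S'. of_int (a s) * Gg (f s)) = v * v'"
  proof -
    have "(\<Sum>s\<in>S \<times> S'. of_int (a s) * Gg (f s)) = (\<Sum>s\<in>S \<times> S'. (of_int (c (fst s)) * Gg (fst s)) * (of_int (c' (snd s)) * Gg (snd s)))"
    proof (rule sum.cong[OF refl])
      fix s assume s: "s \<in> S \<times> S'"
      then have m: "fst s \<in> Cu \<times> monomials n" "snd s \<in> Cu \<times> monomials n"
        using S(2) S'(2) by (auto simp: mem_Times_iff)
      show "of_int (a s) * Gg (f s) = (of_int (c (fst s)) * Gg (fst s)) * (of_int (c' (snd s)) * Gg (snd s))"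
        using Gg_mul[OF m] by (simp add: a_def f_def case_prod_beta mult_ac)
    qed
    also have "\<dots> = v * v'" unfolding S(4) S'(4) sum_product sum.cartesian_product by (simp add: case_prod_beta)
    finally show ?thesis .
  qed
  ultimately show ?thesis by simp
qed

lemma nf_const: assumes "p \<in> Cu" shows "(\<iota> p, \<iota>' (phi p)) \<in> NF"
proof -
  have "((\<Sum>r\<in>{(p, zm)}. of_int ((\<lambda>_. 1) r) * Gf r), (\<Sum>r\<in>{(p, zm)}. of_int ((\<lambda>_. 1) r) * Gg r)) \<in> NF"
    by (rule NF_I) (use assms in \<open>auto simp: zm_def monomials_def\<close>)
  then show ?thesis by (simp add: Gf_def Gg_def zm_def)
qed

lemma nf_one: "(1, 1) \<in> NF"
  using nf_const[OF Cu_one] by (simp add: iota_one phi_one iota'_one)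

lemma nf_x: assumes i: "i < n" shows "(X t0 i, X' t0 i) \<in> NF"
proof -
  have "((\<Sum>r\<in>{(1, em i)}. of_int ((\<lambda>_. 1) r) * Gf r), (\<Sum>r\<in>{(1, em i)}. of_int ((\<lambda>_. 1) r) * Gg r)) \<in> NF"
    by (rule NF_I) (use i Cu_one in \<open>auto simp: em_def monomials_def\<close>)
  moreover have "(\<Prod>j<n. X t0 j ^ em i j) = X t0 i"
  proof -
    have "(\<Prod>j<n. X t0 j ^ em i j) = (\<Prod>j<n. if j = i then X t0 j else 1)"
      unfolding em_def by (rule prod.cong) auto
    then show ?thesis using i by (simp add: prod.delta)
  qed
  moreover have "(\<Prod>j<n. X' t0 j ^ em i j) = X' t0 i"
  proof -
    have "(\<Prod>j<n. X' t0 j ^ em i j) = (\<Prod>j<n. if j = i then X' t0 j else 1)"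
      unfolding em_def by (rule prod.cong) auto
    then show ?thesis using i by (simp add: prod.delta)
  qed
  ultimately show ?thesis by (simp add: Gf_def Gg_def iota_one phi_one iota'_one)
qed

end



context ctx
begin

lemma gri_sum: "T \<subseteq> Cu \<times> {m} \<Longrightarrow> finite T \<Longrightarrow>
   (\<Sum>r\<in>T. of_int (c r) * \<iota> (fst r)) \<in> group_ring_image Cu \<iota>"
proof -
  assume T: "T \<subseteq> Cu \<times> {m}" "finite T"
  have inj: "inj_on fst T" using T(1) by (auto simp: inj_on_def)
  have "(\<Sum>p\<in>fst ` T. of_int (c (p, m)) * \<iota> p) = (\<Sum>r\<in>T. of_int (c (fst r, m)) * \<iota> (fst r))"
    by (rule sum.reindex[OF inj, unfolded comp_def])
  also have "\<dots> = (\<Sum>r\<in>T. of_int (c r) * \<iota> (fst r))"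
    by (rule sum.cong) (use T(1) in auto)
  finally have e: "(\<Sum>r\<in>T. of_int (c r) * \<iota> (fst r)) = (\<Sum>p\<in>fst ` T. of_int (c (p, m)) * \<iota> p)" by simp
  have "fst ` T \<subseteq> Cu" "finite (fst ` T)" using T by auto
  then show ?thesis unfolding e group_ring_image_def
    by (intro CollectI exI[of _ "fst ` T"] exI[of _ "\<lambda>p. c (p, m)"]) simp
qed

lemma one_gri: "1 \<in> group_ring_image Cu \<iota>"
proof -
  have "(\<Sum>s\<in>{1}. of_int ((\<lambda>_. 1) s) * \<iota> s) \<in> group_ring_image Cu \<iota>"
    unfolding group_ring_image_def using Cu_one
    by (intro CollectI exI[of _ "{1}"] exI[of _ "\<lambda>_. 1"]) simp
  then show ?thesis by (simp add: iota_one)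
qed

lemma gri_frac: "a \<in> group_ring_image Cu \<iota> \<Longrightarrow> a \<in> frac_group_ring Cu \<iota>"
  unfolding frac_group_ring_def using one_gri
  by (intro CollectI exI[of _ a] exI[of _ 1]) simp

lemma nf_zero: assumes "(0, v) \<in> NF" shows "v = 0"
proof -
  obtain S c where S: "finite S" "S \<subseteq> Cu \<times> monomials n"
    "0 = (\<Sum>r\<in>S. of_int (c r) * Gf r)" "v = (\<Sum>r\<in>S. of_int (c r) * Gg r)"
    using assms unfolding NF_def by blast
  define mon where "mon m = (\<Prod>i<n. X t0 i ^ m i)" for m
  define T where "T m = {r\<in>S. snd r = m}" for m
  define Cm where "Cm m = (\<Sum>r\<in>T m. of_int (c r) * \<iota> (fst r))" for m
  have gtb: "gen_trans_basis n (frac_group_ring Cu \<iota>) (X t0)"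
    using seed[OF t0v] by (simp add: is_seed_def)
  have "(\<Sum>r\<in>S. of_int (c r) * Gf r) = (\<Sum>m\<in>snd ` S. \<Sum>r\<in>T m. of_int (c r) * Gf r)"
    unfolding T_def by (rule sum.image_gen[OF S(1)])
  also have "\<dots> = (\<Sum>m\<in>snd ` S. Cm m * mon m)"
    unfolding Cm_def sum_distrib_right
    by (intro sum.cong refl) (auto simp: T_def Gf_def mon_def mult_ac)
  finally have s1: "(\<Sum>r\<in>S. of_int (c r) * Gf r) = (\<Sum>m\<in>snd ` S. Cm m * mon m)" .
  have supp: "{m. Cm m \<noteq> 0} \<subseteq> snd ` S"
  proof
    fix m assume "m \<in> {m. Cm m \<noteq> 0}"
    then have "T m \<noteq> {}" by (auto simp: Cm_def)
    then show "m \<in> snd ` S" by (force simp: T_def image_iff)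
  qed
  have fS: "finite (snd ` S)" using S(1) by simp
  have "poly_eval n Cm (X t0) = (\<Sum>m\<in>snd ` S. Cm m * mon m)"
    unfolding poly_eval_def mon_def[symmetric]
    by (rule sum.mono_neutral_left[OF fS supp]) auto
  then have pe: "poly_eval n Cm (X t0) = 0" using s1 S(3) by simp
  have "snd ` S \<subseteq> monomials n" using S(2) by auto
  then have fp: "fin_poly n Cm" unfolding fin_poly_def
    using supp fS by (auto intro: finite_subset)
  have inK: "\<forall>m. Cm m \<in> frac_group_ring Cu \<iota>"
  proof
    fix m
    have "T m \<subseteq> Cu \<times> {m}" "finite (T m)" using S(1,2) by (auto simp: T_def)
    then show "Cm m \<in> frac_group_ring Cu \<iota>" unfolding Cm_def by (intro gri_frac gri_sum)
  qed
  have g1: "\<forall>c. fin_poly n c \<longrightarrow> (\<forall>m. c m \<in> frac_group_ring Cu \<iota>) \<longrightarrow> poly_eval n c (X t0) = 0 \<longrightarrow> (\<forall>m. c m = 0)"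
    using gtb unfolding gen_trans_basis_def by (elim conjE)
  have C0: "\<forall>m. Cm m = 0" using spec[OF g1, of Cm] fp inK pe by simp
  have c0: "c r = 0" if r: "r \<in> S" for r
  proof -
    define m where "m = snd r"
    have Tm: "T m \<subseteq> Cu \<times> {m}" "finite (T m)" using S(1,2) by (auto simp: T_def)
    have inj: "inj_on fst (T m)" using Tm(1) by (auto simp: inj_on_def)
    have "(\<Sum>p\<in>fst ` T m. of_int (c (p, m)) * \<iota> p) = (\<Sum>r\<in>T m. of_int (c (fst r, m)) * \<iota> (fst r))"
      by (rule sum.reindex[OF inj, unfolded comp_def])
    also have "\<dots> = Cm m" unfolding Cm_def by (rule sum.cong) (use Tm(1) in auto)
    finally have z: "(\<Sum>p\<in>fst ` T m. of_int (c (p, m)) * \<iota> p) = (0::'f)" using C0 by simp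
    have "fst ` T m \<subseteq> Cu" "finite (fst ` T m)" using Tm by auto
    moreover have ce: "\<forall>S c. finite S \<longrightarrow> S \<subseteq> Cu \<longrightarrow>
        (\<Sum>s\<in>S. of_int (c s) * \<iota> s) = (0::'f) \<longrightarrow> (\<forall>s\<in>S. c s = (0::int))"
      using emb unfolding coeff_embedding_def U_simps by (elim conjE)
    ultimately have "\<forall>p\<in>fst ` T m. c (p, m) = 0"
      using spec[OF spec[OF ce, of "fst ` T m"], of "\<lambda>p. c (p, m)"] z by simp
    moreover have "r \<in> T m" using r by (simp add: T_def m_def)
    ultimately have "c (fst r, m) = 0" by blast
    then show "c r = 0" by (simp add: m_def)
  qed
  show "v = 0" using S(4) c0 by simp
qed

lemma nf_den: "(w, z) \<in> NF \<Longrightarrow> z \<noteq> 0 \<Longrightarrow> w \<noteq> 0"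
  using nf_zero by blast

definition L :: "('f \<times> 'g) set" where
  "L = {(u / w, v / z) | u v w z. (u, v) \<in> NF \<and> (w, z) \<in> NF \<and> z \<noteq> 0}"

lemma L_I: "(u, v) \<in> NF \<Longrightarrow> (w, z) \<in> NF \<Longrightarrow> z \<noteq> 0 \<Longrightarrow> (u / w, v / z) \<in> L"
  unfolding L_def by blast
lemma L_E: assumes "(a, b) \<in> L"
  obtains u v w z where "(u, v) \<in> NF" "(w, z) \<in> NF" "z \<noteq> 0" "w \<noteq> 0" "a = u / w" "b = v / z"
  using assms nf_den unfolding L_def by blast

lemma nf_diff: "(u, v) \<in> NF \<Longrightarrow> (u', v') \<in> NF \<Longrightarrow> (u - u', v - v') \<in> NF"
  using nf_add[of u v "- u'" "- v'"] nf_neg[of u' v'] by simp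

lemma L_fun: assumes "(a, b) \<in> L" "(a, b') \<in> L" shows "b = b'"
proof -
  obtain u v w z where 1: "(u, v) \<in> NF" "(w, z) \<in> NF" "z \<noteq> 0" "w \<noteq> 0" "a = u / w" "b = v / z"
    using assms(1) by (rule L_E)
  obtain u' v' w' z' where 2: "(u', v') \<in> NF" "(w', z') \<in> NF" "z' \<noteq> 0" "w' \<noteq> 0" "a = u' / w'" "b' = v' / z'"
    using assms(2) by (rule L_E)
  have "u * w' = u' * w" using 1 2 by (simp add: field_simps)
  moreover have "(u * w' - u' * w, v * z' - v' * z) \<in> NF"
    using 1 2 by (intro nf_diff nf_mul)
  ultimately have "(0, v * z' - v' * z) \<in> NF" by simp
  then have e: "v * z' = v' * z" using nf_zero by fastforce
  show ?thesis unfolding 1(6) 2(6) using 1(3) 2(3) e by (simp add: frac_eq_eq)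
qed

lemma L_nf: "(u, v) \<in> NF \<Longrightarrow> (u, v) \<in> L"
  using L_I[of u v 1 1] nf_one by simp

lemma L_add: assumes "(a, b) \<in> L" "(a', b') \<in> L" shows "(a + a', b + b') \<in> L"
proof -
  obtain u v w z where 1: "(u, v) \<in> NF" "(w, z) \<in> NF" "z \<noteq> 0" "w \<noteq> 0" "a = u / w" "b = v / z"
    using assms(1) by (rule L_E)
  obtain u' v' w' z' where 2: "(u', v') \<in> NF" "(w', z') \<in> NF" "z' \<noteq> 0" "w' \<noteq> 0" "a' = u' / w'" "b' = v' / z'"
    using assms(2) by (rule L_E)
  have "((u * w' + u' * w) / (w * w'), (v * z' + v' * z) / (z * z')) \<in> L"
    using 1 2 by (intro L_I nf_add nf_mul) auto
  then show ?thesis using 1 2 by (simp add: add_frac_eq)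
qed

lemma L_mul: assumes "(a, b) \<in> L" "(a', b') \<in> L" shows "(a * a', b * b') \<in> L"
proof -
  obtain u v w z where 1: "(u, v) \<in> NF" "(w, z) \<in> NF" "z \<noteq> 0" "w \<noteq> 0" "a = u / w" "b = v / z"
    using assms(1) by (rule L_E)
  obtain u' v' w' z' where 2: "(u', v') \<in> NF" "(w', z') \<in> NF" "z' \<noteq> 0" "w' \<noteq> 0" "a' = u' / w'" "b' = v' / z'"
    using assms(2) by (rule L_E)
  have "((u * u') / (w * w'), (v * v') / (z * z')) \<in> L"
    using 1 2 by (intro L_I nf_add nf_mul) auto
  then show ?thesis using 1 2 by simp
qed

lemma L_inv: assumes "(a, b) \<in> L" "b \<noteq> 0" shows "(inverse a, inverse b) \<in> L"
proof -
  obtain u v w z where 1: "(u, v) \<in> NF" "(w, z) \<in> NF" "z \<noteq> 0" "w \<noteq> 0" "a = u / w" "b = v / z"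
    using assms(1) by (rule L_E)
  have "v \<noteq> 0" using 1 assms(2) by auto
  then have "(w / u, z / v) \<in> L" using 1 by (intro L_I) auto
  then show ?thesis using 1 by simp
qed

lemma L_one: "(1, 1) \<in> L" using L_nf[OF nf_one] .

lemma L_pow: "(a, b) \<in> L \<Longrightarrow> (a ^ k, b ^ k) \<in> L"
  by (induction k) (auto simp: L_one L_mul)

lemma L_powi: "(a, b) \<in> L \<Longrightarrow> b \<noteq> 0 \<Longrightarrow> (a powi e, b powi e) \<in> L"
  by (auto simp: power_int_def L_pow L_inv)

lemma L_prod: "finite J \<Longrightarrow> (\<forall>j\<in>J. (f j, g j) \<in> L) \<Longrightarrow> ((\<Prod>j\<in>J. f j), (\<Prod>j\<in>J. g j)) \<in> L"
  by (induction J rule: finite_induct) (auto simp: L_one L_mul)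

lemma L_div: "(a, b) \<in> L \<Longrightarrow> (c, d) \<in> L \<Longrightarrow> d \<noteq> 0 \<Longrightarrow> (a / c, b / d) \<in> L"
  using L_mul[of a b "inverse c" "inverse d"] L_inv[of c d] by (simp add: divide_inverse)

lemma L_const: "p \<in> Cu \<Longrightarrow> (\<iota> p, \<iota>' (phi p)) \<in> L"
  by (rule L_nf[OF nf_const])

end



lemma gtb_nz:
  assumes g: "gen_trans_basis n K (x :: nat \<Rightarrow> 'f::field)" and K0: "0 \<in> K" and K1: "1 \<in> K" and i: "i < n"
  shows "x i \<noteq> 0"
proof
  assume x0: "x i = 0"
  define e where "e = (\<lambda>j. if j = i then 1 else (0::nat))"
  define c where "c m = (if m = e then 1 else (0::'f))" for m
  have supp: "{m. c m \<noteq> 0} = {e}" by (auto simp: c_def)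
  have fp: "fin_poly n c" unfolding fin_poly_def supp using i by (auto simp: e_def monomials_def)
  have cK: "\<forall>m. c m \<in> K" using K0 K1 by (simp add: c_def)
  have "(\<Prod>j<n. x j ^ e j) = (\<Prod>j<n. if j = i then x j else 1)"
    unfolding e_def by (rule prod.cong) auto
  also have "\<dots> = x i" using i by (simp add: prod.delta)
  finally have "poly_eval n c x = x i" unfolding poly_eval_def supp by (simp add: c_def)
  then have "poly_eval n c x = 0" using x0 by simp
  moreover have g1: "\<forall>c. fin_poly n c \<longrightarrow> (\<forall>m. c m \<in> K) \<longrightarrow> poly_eval n c x = 0 \<longrightarrow> (\<forall>m. c m = 0)"
    using g unfolding gen_trans_basis_def by (elim conjE)
  ultimately have "\<forall>m. c m = 0" using fp cK by blast
  then show False by (metis c_def one_neq_zero)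
qed

lemma vertex_butlast: "tree_vertex n (w @ [k]) \<Longrightarrow> tree_vertex n w \<and> k < n"
  unfolding tree_vertex_def
proof (intro conjI allI impI)
  assume h: "set (w @ [k]) \<subseteq> {..<n} \<and> (\<forall>i. Suc i < length (w @ [k]) \<longrightarrow> (w @ [k]) ! i \<noteq> (w @ [k]) ! Suc i)"
  then show "set w \<subseteq> {..<n}" "k < n" by auto
  fix i assume "Suc i < length w"
  then show "w ! i \<noteq> w ! Suc i" using h[THEN conjunct2, rule_format, of i] by (simp add: nth_append)
qed

context ctx
begin

lemma grp_P'_0: "0 \<in> frac_group_ring (sf_carrier P') \<iota>'"
proof -
  have "(\<Sum>s\<in>{}. of_int ((\<lambda>_. 0) s) * \<iota>' s) \<in> group_ring_image (sf_carrier P') \<iota>'"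
    unfolding group_ring_image_def by (intro CollectI exI[of _ "{}"] exI[of _ "\<lambda>_. 0"]) simp
  moreover have "(\<Sum>s\<in>{S.one}. of_int ((\<lambda>_. 1) s) * \<iota>' s) \<in> group_ring_image (sf_carrier P') \<iota>'"
    unfolding group_ring_image_def by (intro CollectI exI[of _ "{S.one}"] exI[of _ "\<lambda>_. 1"]) simp
  ultimately have "0 / 1 \<in> frac_group_ring (sf_carrier P') \<iota>'"
    unfolding frac_group_ring_def by (intro CollectI exI[of _ 0] exI[of _ 1]) (simp add: iota'_one)
  then show ?thesis by simp
qed

lemma grp_P'_1: "1 \<in> frac_group_ring (sf_carrier P') \<iota>'"
proof -
  have "(\<Sum>s\<in>{S.one}. of_int ((\<lambda>_. 1) s) * \<iota>' s) \<in> group_ring_image (sf_carrier P') \<iota>'"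
    unfolding group_ring_image_def by (intro CollectI exI[of _ "{S.one}"] exI[of _ "\<lambda>_. 1"]) simp
  then have "1 / 1 \<in> frac_group_ring (sf_carrier P') \<iota>'"
    unfolding frac_group_ring_def by (intro CollectI exI[of _ 1] exI[of _ 1]) (simp add: iota'_one)
  then show ?thesis by simp
qed

lemma X'_nz: "tree_vertex n s \<Longrightarrow> i < n \<Longrightarrow> X' s i \<noteq> 0"
  using seed' grp_P'_0 grp_P'_1 gtb_nz unfolding is_seed_def by blast

lemma Y_in: "tree_vertex n s \<Longrightarrow> i < n \<Longrightarrow> Y s i \<in> Cu"
  using seed unfolding is_seed_def U_simps by blast

definition Good :: "nat list \<Rightarrow> bool" where
  "Good s \<longleftrightarrow> (\<forall>i<n. (X s i, X' s i) \<in> L \<and> phi (Y s i) = Y' s i)"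

lemma Good_t0: "Good t0"
  unfolding Good_def using Y0 phi_y L_nf[OF nf_x] by simp

lemma step:
  assumes e: "tree_edge n s s' k" and G: "Good s"
  shows "Good s'"
proof -
  have sv: "tree_vertex n s" and sv': "tree_vertex n s'" and k: "k < n"
    using e by (auto simp: tree_edge_def)
  have m: "\<forall>i<n. X s' i = mut_x U \<iota> n k (X s) (Y s) (B s) i \<and> Y s' i = mut_y U k (Y s) (B s) i"
    using cp e unfolding cluster_pattern_def by blast
  have m': "\<forall>i<n. X' s' i = mut_x P' \<iota>' n k (X' s) (Y' s) (B' s) i \<and> Y' s' i = mut_y P' k (Y' s) (B' s) i"
    using cp' e unfolding cluster_pattern_def by blast
  have Bs: "\<And>i j. i < n \<Longrightarrow> j < n \<Longrightarrow> B' s i j = B s i j" using BB sv by blast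
  have GX: "\<And>i. i < n \<Longrightarrow> (X s i, X' s i) \<in> L" and GY: "\<And>i. i < n \<Longrightarrow> phi (Y s i) = Y' s i"
    using G by (auto simp: Good_def)
  have Yk: "Y s k \<in> Cu" using Y_in sv k by blast
  show ?thesis unfolding Good_def
  proof (intro allI impI conjI)
    fix i assume i: "i < n"
    have Yi: "Y s i \<in> Cu" using Y_in sv i by blast
    have "phi (Y s' i) = phi (mut_y U k (Y s) (B s) i)" using m i by simp
    also have "\<dots> = mut_y P' k (\<lambda>j. phi (Y s j)) (B s) i"
      by (rule H.h_mut_y) (use Yk Yi in simp_all)
    also have "\<dots> = mut_y P' k (Y' s) (B' s) i"
      unfolding mut_y_def using GY[OF i] GY[OF k] Bs[OF k i] by simp
    also have "\<dots> = Y' s' i" using m' i by simp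
    finally show "phi (Y s' i) = Y' s' i" .
    show "(X s' i, X' s' i) \<in> L"
    proof (cases "i = k")
      case False
      then show ?thesis using m m' i GX[OF i] by (simp add: mut_x_def)
    next
      case True
      have a1: "(inverse (X s k), inverse (X' s k)) \<in> L"
        using L_inv GX[OF k] X'_nz[OF sv k] by blast
      have a2: "((\<Prod>j<n. X s j powi pos (- B s j k)), (\<Prod>j<n. X' s j powi pos (- B' s j k))) \<in> L"
      proof -
        have "((\<Prod>j<n. X s j powi pos (- B s j k)), (\<Prod>j<n. X' s j powi pos (- B s j k))) \<in> L"
          using GX X'_nz[OF sv] by (intro L_prod) (auto intro: L_powi)
        moreover have "(\<Prod>j<n. X' s j powi pos (- B' s j k)) = (\<Prod>j<n. X' s j powi pos (- B s j k))"
          using Bs k by (intro prod.cong) auto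
        ultimately show ?thesis by simp
      qed
      have a3: "((\<Prod>j<n. X s j powi B s j k), (\<Prod>j<n. X' s j powi B' s j k)) \<in> L"
      proof -
        have "((\<Prod>j<n. X s j powi B s j k), (\<Prod>j<n. X' s j powi B s j k)) \<in> L"
          using GX X'_nz[OF sv] by (intro L_prod) (auto intro: L_powi)
        moreover have "(\<Prod>j<n. X' s j powi B' s j k) = (\<Prod>j<n. X' s j powi B s j k)"
          using Bs k by (intro prod.cong) auto
        ultimately show ?thesis by simp
      qed
      have a4: "(1 + \<iota> (Y s k) * (\<Prod>j<n. X s j powi B s j k), 1 + \<iota>' (Y' s k) * (\<Prod>j<n. X' s j powi B' s j k)) \<in> L"
        using L_add[OF L_one L_mul[OF L_const[OF Yk] a3]] GY[OF k] by simp
      have 1: "1 + Y s k \<in> Cu" using Yk UU.add_in UU.one_in by simp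
      have p1: "phi (1 + Y s k) = S.add S.one (Y' s k)"
        using phi_add[OF Cu_one Yk] phi_one GY[OF k] by simp
      have a5: "(\<iota> (1 + Y s k), \<iota>' (S.add S.one (Y' s k))) \<in> L"
        using L_const[OF 1] p1 by simp
      have nz: "\<iota>' (S.add S.one (Y' s k)) \<noteq> 0"
        using p1 phi_in[OF 1] iota'_nz by metis
      have "(inverse (X s k) * (\<Prod>j<n. X s j powi pos (- B s j k)) * (1 + \<iota> (Y s k) * (\<Prod>j<n. X s j powi B s j k)) / \<iota> (1 + Y s k),
             inverse (X' s k) * (\<Prod>j<n. X' s j powi pos (- B' s j k)) * (1 + \<iota>' (Y' s k) * (\<Prod>j<n. X' s j powi B' s j k)) / \<iota>' (S.add S.one (Y' s k))) \<in> L"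
        by (intro L_div L_mul a1 a2 a4 a5 nz)
      then show ?thesis using m m' i True by (simp add: mut_x_def)
    qed
  qed
qed

lemma Good_up: "tree_vertex n s \<Longrightarrow> Good s \<Longrightarrow> Good []"
proof (induction s rule: rev_induct)
  case (snoc k w)
  have v: "tree_vertex n w" "k < n" using vertex_butlast[OF snoc.prems(1)] by auto
  have "tree_edge n (w @ [k]) w k" using v snoc.prems(1) by (simp add: tree_edge_def)
  then have "Good w" using step snoc.prems(2) by blast
  then show ?case using snoc.IH v by blast
qed simp

lemma Good_down: "tree_vertex n s \<Longrightarrow> Good [] \<Longrightarrow> Good s"
proof (induction s rule: rev_induct)
  case (snoc k w)
  have v: "tree_vertex n w" "k < n" using vertex_butlast[OF snoc.prems(1)] by auto
  have "tree_edge n w (w @ [k]) k" using v snoc.prems(1) by (simp add: tree_edge_def)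
  then show ?case using step snoc.IH v snoc.prems(2) by blast
qed simp

lemma Good_all: "tree_vertex n s \<Longrightarrow> Good s"
  using Good_up[OF t0v Good_t0] Good_down by blast

lemma main:
  assumes tv: "tree_vertex n t" and tv': "tree_vertex n t'" and perm: "\<sigma> permutes {..<n}"
    and eq: "seed_eq_perm n \<sigma> (X t) (Y t) (B t) (X t') (Y t') (B t')"
  shows "seed_eq_perm n \<sigma> (X' t) (Y' t) (B' t) (X' t') (Y' t') (B' t')"
  unfolding seed_eq_perm_def
proof (intro allI impI conjI)
  have ip: "inv \<sigma> permutes {..<n}" using permutes_inv[OF perm] .
  fix i assume i: "i < n"
  have j: "inv \<sigma> i < n" using permutes_in_image[OF ip] i by simp
  have e: "X t i = X t' (inv \<sigma> i)" "Y t i = Y t' (inv \<sigma> i)"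
    "\<And>l. l < n \<Longrightarrow> B t i l = B t' (inv \<sigma> i) (inv \<sigma> l)"
    using eq i unfolding seed_eq_perm_def by auto
  have G: "Good t" "Good t'" using Good_all tv tv' by auto
  have "(X t i, X' t i) \<in> L" "(X t i, X' t' (inv \<sigma> i)) \<in> L"
    using G i j e(1) unfolding Good_def by auto
  then show "X' t i = X' t' (inv \<sigma> i)" by (rule L_fun)
  have "Y' t i = phi (Y t i)" using G i unfolding Good_def by auto
  also have "\<dots> = Y' t' (inv \<sigma> i)" using G j e(2) unfolding Good_def by auto
  finally show "Y' t i = Y' t' (inv \<sigma> i)" .
  fix l assume l: "l < n"
  have jl: "inv \<sigma> l < n" using permutes_in_image[OF ip] l by simp
  show "B' t i l = B' t' (inv \<sigma> i) (inv \<sigma> l)"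
    using BB tv tv' i l j jl e(3)[OF l] by simp
qed

end

theorem proposition2p26:
  fixes n :: nat
    and y :: "nat \<Rightarrow> 'k::field_char_0"
    and \<iota> :: "'k \<Rightarrow> 'f::field"
    and X :: "nat list \<Rightarrow> nat \<Rightarrow> 'f"
    and Y :: "nat list \<Rightarrow> nat \<Rightarrow> 'k"
    and B :: "nat list \<Rightarrow> nat \<Rightarrow> nat \<Rightarrow> int"
    and P' :: "'q semifield"
    and \<iota>' :: "'q \<Rightarrow> 'g::field"
    and X' :: "nat list \<Rightarrow> nat \<Rightarrow> 'g"
    and Y' :: "nat list \<Rightarrow> nat \<Rightarrow> 'q"
    and B' :: "nat list \<Rightarrow> nat \<Rightarrow> nat \<Rightarrow> int"
    and t0 t t' :: "nat list"
    and \<sigma> :: "nat \<Rightarrow> nat"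
  assumes "rational_function_field n y"
    and "tree_vertex n t0"
    and "cluster_pattern (univ_semifield n y) \<iota> n X Y B"
    and "\<forall>i<n. Y t0 i = y i"
    and "cluster_pattern P' \<iota>' n X' Y' B'"
    and "\<forall>s. tree_vertex n s \<longrightarrow> (\<forall>i<n. \<forall>j<n. B' s i j = B s i j)"
    and "tree_vertex n t" and "tree_vertex n t'"
    and "\<sigma> permutes {..<n}"
    and "seed_eq_perm n \<sigma> (X t) (Y t) (B t) (X t') (Y t') (B t')"
  shows "seed_eq_perm n \<sigma> (X' t) (Y' t) (B' t) (X' t') (Y' t') (B' t')"
proof -
  interpret C: ctx n y \<iota> X Y B P' \<iota>' X' Y' B' t0
    by (unfold_locales) (use assms in auto)
  show ?thesis by (rule C.main) (use assms in auto)
qed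

end
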